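(* Let $\mathcal H_1,\dots,\mathcal H_9,\mathcal H_E$ be finite-dimensional complex Hilbert spaces and $|\psi\rangle\in\mathcal H_1\otimes\cdots\otimes\mathcal H_9\otimes\mathcal H_E$. For each $k\in[9]$ let $X_k,Z_k$ be Hermitian operators on $\mathcal H_k$ (extended by the identity to the whole space). Define $\tilde S_1=Z_1Z_2$, $\tilde S_2=Z_1Z_3$, $\tilde S_3=Z_4Z_5$, $\tilde S_4=Z_4Z_6$, $\tilde S_5=Z_7Z_8$, $\tilde S_6=Z_7Z_9$, $\tilde S_7=X_1X_2X_3X_4X_5X_6$, $\tilde S_8=X_1X_2X_3X_7X_8X_9$, $\tilde S_9=X_4X_5X_6X_7X_8X_9$. Assume (i) $X_kZ_k+Z_kX_k=0$ for $k\in\{1,4,7\}$; (ii) $\tilde S_k|\psi\rangle=|\psi\rangle$ for all $k\in[9]$; (iii) $X_k^2=Z_k^2=I$ for $k\in\{2,3,5,6,8,9\}$. Then for every $k\in[9]$: $X_k^2|\psi\rangle=Z_k^2|\psi\rangle=|\psi\rangle$ and $(X_kZ_k+Z_kX_k)|\psi\rangle=0$.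
   Context: Operators acting on different tensor factors commute. *)

theory Defs
  imports Complex_Main
begin

text \<open>Factor k (k = 1..9) and the
  environment E (encoded as index 0) have dimension d k; an orthonormal basis of
  the tensor product is indexed by tuples i :: nat => nat with i k < d k for
  k in {0..9} and i k = 0 otherwise.  A vector is a function from tuples to
  complex coefficients, supported on valid tuples.\<close>

definition valid_idx :: "(nat \<Rightarrow> nat) \<Rightarrow> (nat \<Rightarrow> nat) \<Rightarrow> bool" where
  "valid_idx d i \<longleftrightarrow> (\<forall>k\<le>9. i k < d k) \<and> (\<forall>k>9. i k = 0)"

definition is_state :: "(nat \<Rightarrow> nat) \<Rightarrow> ((nat \<Rightarrow> nat) \<Rightarrow> complex) \<Rightarrow> bool" where
  "is_state d \<psi> \<longleftrightarrow> (\<forall>i. \<not> valid_idx d i \<longrightarrow> \<psi> i = 0)"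

definition lift :: "(nat \<Rightarrow> nat) \<Rightarrow> nat \<Rightarrow> (nat \<Rightarrow> nat \<Rightarrow> complex)
                    \<Rightarrow> ((nat \<Rightarrow> nat) \<Rightarrow> complex) \<Rightarrow> ((nat \<Rightarrow> nat) \<Rightarrow> complex)" where
  "lift d k A \<psi> = (\<lambda>i. if valid_idx d i then (\<Sum>b<d k. A (i k) b * \<psi> (i(k := b))) else 0)"

definition apply_prod :: "(nat \<Rightarrow> nat) \<Rightarrow> (nat \<Rightarrow> nat \<Rightarrow> nat \<Rightarrow> complex) \<Rightarrow> nat list
                    \<Rightarrow> ((nat \<Rightarrow> nat) \<Rightarrow> complex) \<Rightarrow> ((nat \<Rightarrow> nat) \<Rightarrow> complex)" where
  "apply_prod d Ops ks \<psi> = foldr (\<lambda>k \<phi>. lift d k (Ops k) \<phi>) ks \<psi>"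

definition hermitian_mat :: "nat \<Rightarrow> (nat \<Rightarrow> nat \<Rightarrow> complex) \<Rightarrow> bool" where
  "hermitian_mat n A \<longleftrightarrow> (\<forall>a<n. \<forall>b<n. A a b = cnj (A b a))"

definition mat_mult :: "nat \<Rightarrow> (nat \<Rightarrow> nat \<Rightarrow> complex) \<Rightarrow> (nat \<Rightarrow> nat \<Rightarrow> complex) \<Rightarrow> nat \<Rightarrow> nat \<Rightarrow> complex" where
  "mat_mult n A B = (\<lambda>a b. \<Sum>c<n. A a c * B c b)"

definition is_identity :: "nat \<Rightarrow> (nat \<Rightarrow> nat \<Rightarrow> complex) \<Rightarrow> bool" where
  "is_identity n A \<longleftrightarrow> (\<forall>a<n. \<forall>b<n. A a b = (if a = b then 1 else 0))"

definition anticommute :: "nat \<Rightarrow> (nat \<Rightarrow> nat \<Rightarrow> complex) \<Rightarrow> (nat \<Rightarrow> nat \<Rightarrow> complex) \<Rightarrow> bool" where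
  "anticommute n A B \<longleftrightarrow> (\<forall>a<n. \<forall>b<n. mat_mult n A B a b + mat_mult n B A a b = 0)"

end

theory Submission imports Defs begin

lemma valid_upd: "valid_idx d i \<Longrightarrow> k \<le> 9 \<Longrightarrow> b < d k \<Longrightarrow> valid_idx d (i(k:=b))"
  by (auto simp: valid_idx_def)

lemma lift_state[simp]: "is_state d (lift d k A \<phi>)"
  by (simp add: is_state_def lift_def)

lemma lift_comm:
  assumes "k \<le> 9" "l \<le> 9" "k \<noteq> l"
  shows "lift d k A (lift d l B \<phi>) = lift d l B (lift d k A \<phi>)"
proof (rule ext)
  fix i
  show "lift d k A (lift d l B \<phi>) i = lift d l B (lift d k A \<phi>) i"
  proof (cases "valid_idx d i")
    case True
    have "lift d k A (lift d l B \<phi>) i = (\<Sum>b<d k. \<Sum>c<d l. A (i k) b * (B (i l) c * \<phi> (i(k:=b, l:=c))))"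
      using True assms by (simp add: lift_def valid_upd sum_distrib_left)
    also have "\<dots> = (\<Sum>c<d l. \<Sum>b<d k. B (i l) c * (A (i k) b * \<phi> (i(l:=c, k:=b))))"
      using assms by (subst sum.swap) (simp add: fun_upd_twist mult.left_commute)
    also have "\<dots> = lift d l B (lift d k A \<phi>) i"
      using True assms by (simp add: lift_def valid_upd sum_distrib_left)
    finally show ?thesis .
  qed (simp add: lift_def)
qed

lemma lift_lift:
  assumes "k \<le> 9"
  shows "lift d k A (lift d k B \<phi>) = lift d k (mat_mult (d k) A B) \<phi>"
proof (rule ext)
  fix i
  show "lift d k A (lift d k B \<phi>) i = lift d k (mat_mult (d k) A B) \<phi> i"
  proof (cases "valid_idx d i")
    case True
    have "lift d k A (lift d k B \<phi>) i = (\<Sum>b<d k. \<Sum>c<d k. A (i k) b * (B b c * \<phi> (i(k:=c))))"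
      using True assms by (simp add: lift_def valid_upd sum_distrib_left)
    also have "\<dots> = (\<Sum>c<d k. (\<Sum>b<d k. A (i k) b * B b c) * \<phi> (i(k:=c)))"
      by (subst sum.swap) (simp add: sum_distrib_right mult.assoc)
    also have "\<dots> = lift d k (mat_mult (d k) A B) \<phi> i"
      using True assms by (simp add: lift_def mat_mult_def)
    finally show ?thesis .
  qed (simp add: lift_def)
qed

lemma lift_id:
  assumes "k \<le> 9" "is_identity (d k) M" "is_state d \<phi>"
  shows "lift d k M \<phi> = \<phi>"
proof (rule ext)
  fix i
  show "lift d k M \<phi> i = \<phi> i"
  proof (cases "valid_idx d i")
    case True
    then have ik: "i k < d k" using assms(1) by (simp add: valid_idx_def)
    have "lift d k M \<phi> i = (\<Sum>b<d k. (if i k = b then 1 else 0) * \<phi> (i(k:=b)))"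
      using True assms ik by (simp add: lift_def is_identity_def)
    also have "\<dots> = (\<Sum>b<d k. if b = i k then \<phi> (i(k:=b)) else 0)"
      by (rule sum.cong) auto
    also have "\<dots> = \<phi> i" using ik by simp
    finally show ?thesis .
  qed (use assms in \<open>simp add: lift_def is_state_def\<close>)
qed

lemma lift_anti:
  assumes "k \<le> 9" "anticommute (d k) A B"
  shows "(\<lambda>i. lift d k A (lift d k B \<phi>) i + lift d k B (lift d k A \<phi>) i) = (\<lambda>i. 0)"
proof (rule ext)
  fix i
  show "lift d k A (lift d k B \<phi>) i + lift d k B (lift d k A \<phi>) i = 0"
  proof (cases "valid_idx d i")
    case True
    then have ik: "i k < d k" using assms(1) by (simp add: valid_idx_def)
    have "lift d k A (lift d k B \<phi>) i + lift d k B (lift d k A \<phi>) i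
       = lift d k (mat_mult (d k) A B) \<phi> i + lift d k (mat_mult (d k) B A) \<phi> i"
      using assms by (simp add: lift_lift)
    also have "\<dots> = (\<Sum>c<d k. (mat_mult (d k) A B (i k) c + mat_mult (d k) B A (i k) c) * \<phi> (i(k:=c)))"
      using True by (simp add: lift_def sum.distrib distrib_right)
    also have "\<dots> = 0" using assms ik by (simp add: anticommute_def)
    finally show ?thesis .
  qed (simp add: lift_def)
qed


lemma anti_transfer:
  assumes "j \<le> 9" "k \<le> 9" "j \<noteq> k" "anticommute (d j) A B"
    and hz: "lift d k D \<psi> = lift d j B \<psi>"
    and hx: "lift d k C \<psi> = lift d j A (R \<psi>)"
    and r1: "lift d k D (R \<psi>) = R (lift d k D \<psi>)"
    and r2: "R (lift d j B \<psi>) = lift d j B (R \<psi>)"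
  shows "(\<lambda>i. lift d k C (lift d k D \<psi>) i + lift d k D (lift d k C \<psi>) i) = (\<lambda>i. 0)"
proof -
  have e1: "lift d k C (lift d k D \<psi>) = lift d j B (lift d j A (R \<psi>))"
    using assms(1-3) by (simp add: hz lift_comm hx[symmetric])
  have "lift d k D (lift d k C \<psi>) = lift d j A (lift d k D (R \<psi>))"
    using assms(1-3) by (simp add: hx lift_comm)
  also have "\<dots> = lift d j A (lift d j B (R \<psi>))"
    by (simp add: r1 hz r2)
  finally have e2: "lift d k D (lift d k C \<psi>) = lift d j A (lift d j B (R \<psi>))" .
  show ?thesis
    unfolding e1 e2 using lift_anti[of j d A B "R \<psi>"] assms(1,4)
    by (simp add: add.commute)
qed

lemma sq_transfer:
  assumes "a \<le> 9" "b \<le> 9" "c \<le> 9" "a \<noteq> b" "a \<noteq> c" "b \<noteq> c"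
    and st: "is_state d \<psi>"
    and hab: "lift d a (X a) (lift d b (X b) \<psi>) = P \<psi>"
    and hac: "lift d a (X a) (lift d c (X c) \<psi>) = Q \<psi>"
    and hbc: "lift d b (X b) (lift d c (X c) \<psi>) = R \<psi>"
    and cR: "\<And>\<phi>. R (lift d a (X a) \<phi>) = lift d a (X a) (R \<phi>)"
    and cQa: "\<And>\<phi>. Q (lift d a (X a) \<phi>) = lift d a (X a) (Q \<phi>)"
    and cQb: "\<And>\<phi>. Q (lift d b (X b) \<phi>) = lift d b (X b) (Q \<phi>)"
    and QP: "Q (P \<psi>) = R \<psi>"
    and RR: "\<And>\<phi>. is_state d \<phi> \<Longrightarrow> R (R \<phi>) = \<phi>"
  shows "lift d a (X a) (lift d a (X a) \<psi>) = \<psi>"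
proof -
  have "R (lift d a (X a) (lift d a (X a) \<psi>)) = lift d a (X a) (lift d a (X a) (lift d b (X b) (lift d c (X c) \<psi>)))"
    by (simp add: cR hbc)
  also have "\<dots> = lift d a (X a) (lift d b (X b) (lift d a (X a) (lift d c (X c) \<psi>)))"
    using assms(1-6) by (simp add: lift_comm)
  also have "\<dots> = Q (lift d a (X a) (lift d b (X b) \<psi>))"
    by (simp add: hac cQa cQb)
  also have "\<dots> = R \<psi>" by (simp add: hab QP)
  finally have "R (R (lift d a (X a) (lift d a (X a) \<psi>))) = R (R \<psi>)" by simp
  then show ?thesis using RR st by simp
qed

theorem mainTheorem4:
  fixes d :: "nat \<Rightarrow> nat"
    and X Z :: "nat \<Rightarrow> nat \<Rightarrow> nat \<Rightarrow> complex"
    and \<psi> :: "(nat \<Rightarrow> nat) \<Rightarrow> complex"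
  assumes state: "is_state d \<psi>"
    and herm: "\<forall>k\<in>{1..9}. hermitian_mat (d k) (X k) \<and> hermitian_mat (d k) (Z k)"
    and anti: "\<forall>k\<in>{1,4,7}. anticommute (d k) (X k) (Z k)"
    and stab: "apply_prod d Z [1,2] \<psi> = \<psi>" "apply_prod d Z [1,3] \<psi> = \<psi>"
      "apply_prod d Z [4,5] \<psi> = \<psi>" "apply_prod d Z [4,6] \<psi> = \<psi>"
      "apply_prod d Z [7,8] \<psi> = \<psi>" "apply_prod d Z [7,9] \<psi> = \<psi>"
      "apply_prod d X [1,2,3,4,5,6] \<psi> = \<psi>"
      "apply_prod d X [1,2,3,7,8,9] \<psi> = \<psi>"
      "apply_prod d X [4,5,6,7,8,9] \<psi> = \<psi>"
    and sq: "\<forall>k\<in>{2,3,5,6,8,9}. is_identity (d k) (mat_mult (d k) (X k) (X k))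
                                \<and> is_identity (d k) (mat_mult (d k) (Z k) (Z k))"
  shows "\<forall>k\<in>{1..9}.
           lift d k (X k) (lift d k (X k) \<psi>) = \<psi>
         \<and> lift d k (Z k) (lift d k (Z k) \<psi>) = \<psi>
         \<and> (\<lambda>i. lift d k (X k) (lift d k (Z k) \<psi>) i + lift d k (Z k) (lift d k (X k) \<psi>) i) = (\<lambda>i. 0)"
proof -
  have xinv: "\<And>k \<phi>. k \<in> {2,3,5,6,8,9} \<Longrightarrow> is_state d \<phi> \<Longrightarrow> lift d k (X k) (lift d k (X k) \<phi>) = \<phi>"
  proof -
    fix k :: nat and \<phi> assume k: "k \<in> {2,3,5,6,8,9}" and "is_state d \<phi>"
    then show "lift d k (X k) (lift d k (X k) \<phi>) = \<phi>"
      using sq k by (subst lift_lift) (auto intro!: lift_id)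
  qed
  have zinv: "\<And>k \<phi>. k \<in> {2,3,5,6,8,9} \<Longrightarrow> is_state d \<phi> \<Longrightarrow> lift d k (Z k) (lift d k (Z k) \<phi>) = \<phi>"
  proof -
    fix k :: nat and \<phi> assume k: "k \<in> {2,3,5,6,8,9}" and "is_state d \<phi>"
    then show "lift d k (Z k) (lift d k (Z k) \<phi>) = \<phi>"
      using sq k by (subst lift_lift) (auto intro!: lift_id)
  qed
  note S = lift_comm xinv zinv state apply_prod_def
  have hz2: "lift d 2 (Z 2) (\<psi>) = lift d 1 (Z 1) (\<psi>)"
    using arg_cong[OF stab(1), of "lift d 2 (Z 2)"] by (simp add: S)
  have hz3: "lift d 3 (Z 3) (\<psi>) = lift d 1 (Z 1) (\<psi>)"
    using arg_cong[OF stab(2), of "lift d 3 (Z 3)"] by (simp add: S)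
  have hz5: "lift d 5 (Z 5) (\<psi>) = lift d 4 (Z 4) (\<psi>)"
    using arg_cong[OF stab(3), of "lift d 5 (Z 5)"] by (simp add: S)
  have hz6: "lift d 6 (Z 6) (\<psi>) = lift d 4 (Z 4) (\<psi>)"
    using arg_cong[OF stab(4), of "lift d 6 (Z 6)"] by (simp add: S)
  have hz8: "lift d 8 (Z 8) (\<psi>) = lift d 7 (Z 7) (\<psi>)"
    using arg_cong[OF stab(5), of "lift d 8 (Z 8)"] by (simp add: S)
  have hz9: "lift d 9 (Z 9) (\<psi>) = lift d 7 (Z 7) (\<psi>)"
    using arg_cong[OF stab(6), of "lift d 9 (Z 9)"] by (simp add: S)
  have zz1: "lift d 1 (Z 1) (lift d 1 (Z 1) (\<psi>)) = \<psi>"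
  proof -
    have "lift d 1 (Z 1) (lift d 1 (Z 1) (\<psi>)) = lift d 1 (Z 1) (lift d 2 (Z 2) (\<psi>))" by (simp only: hz2)
    also have "\<dots> = \<psi>" using stab by (simp add: apply_prod_def)
    finally show ?thesis .
  qed
  have zz4: "lift d 4 (Z 4) (lift d 4 (Z 4) (\<psi>)) = \<psi>"
  proof -
    have "lift d 4 (Z 4) (lift d 4 (Z 4) (\<psi>)) = lift d 4 (Z 4) (lift d 5 (Z 5) (\<psi>))" by (simp only: hz5)
    also have "\<dots> = \<psi>" using stab by (simp add: apply_prod_def)
    finally show ?thesis .
  qed
  have zz7: "lift d 7 (Z 7) (lift d 7 (Z 7) (\<psi>)) = \<psi>"
  proof -
    have "lift d 7 (Z 7) (lift d 7 (Z 7) (\<psi>)) = lift d 7 (Z 7) (lift d 8 (Z 8) (\<psi>))" by (simp only: hz8)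
    also have "\<dots> = \<psi>" using stab by (simp add: apply_prod_def)
    finally show ?thesis .
  qed
  have an2: "(\<lambda>i. lift d 2 (X 2) (lift d 2 (Z 2) \<psi>) i + lift d 2 (Z 2) (lift d 2 (X 2) \<psi>) i) = (\<lambda>i. 0)"
  proof (rule anti_transfer[where j=1 and R="(\<lambda>\<phi>. lift d 3 (X 3) (lift d 4 (X 4) (lift d 5 (X 5) (lift d 6 (X 6) (\<phi>)))))"])
    show "anticommute (d 1) (X 1) (Z 1)" using anti by simp
    show "lift d 2 (X 2) (\<psi>) = lift d 1 (X 1) (lift d 3 (X 3) (lift d 4 (X 4) (lift d 5 (X 5) (lift d 6 (X 6) (\<psi>)))))"
      using arg_cong[OF stab(7), of "lift d 2 (X 2)"] by (simp add: S)
    show "lift d 2 (Z 2) \<psi> = lift d 1 (Z 1) \<psi>" by (rule hz2)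
  qed (simp_all add: lift_comm)
  have an3: "(\<lambda>i. lift d 3 (X 3) (lift d 3 (Z 3) \<psi>) i + lift d 3 (Z 3) (lift d 3 (X 3) \<psi>) i) = (\<lambda>i. 0)"
  proof (rule anti_transfer[where j=1 and R="(\<lambda>\<phi>. lift d 2 (X 2) (lift d 4 (X 4) (lift d 5 (X 5) (lift d 6 (X 6) (\<phi>)))))"])
    show "anticommute (d 1) (X 1) (Z 1)" using anti by simp
    show "lift d 3 (X 3) (\<psi>) = lift d 1 (X 1) (lift d 2 (X 2) (lift d 4 (X 4) (lift d 5 (X 5) (lift d 6 (X 6) (\<psi>)))))"
      using arg_cong[OF stab(7), of "lift d 3 (X 3)"] by (simp add: S)
    show "lift d 3 (Z 3) \<psi> = lift d 1 (Z 1) \<psi>" by (rule hz3)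
  qed (simp_all add: lift_comm)
  have an5: "(\<lambda>i. lift d 5 (X 5) (lift d 5 (Z 5) \<psi>) i + lift d 5 (Z 5) (lift d 5 (X 5) \<psi>) i) = (\<lambda>i. 0)"
  proof (rule anti_transfer[where j=4 and R="(\<lambda>\<phi>. lift d 1 (X 1) (lift d 2 (X 2) (lift d 3 (X 3) (lift d 6 (X 6) (\<phi>)))))"])
    show "anticommute (d 4) (X 4) (Z 4)" using anti by simp
    show "lift d 5 (X 5) (\<psi>) = lift d 4 (X 4) (lift d 1 (X 1) (lift d 2 (X 2) (lift d 3 (X 3) (lift d 6 (X 6) (\<psi>)))))"
      using arg_cong[OF stab(7), of "lift d 5 (X 5)"] by (simp add: S)
    show "lift d 5 (Z 5) \<psi> = lift d 4 (Z 4) \<psi>" by (rule hz5)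
  qed (simp_all add: lift_comm)
  have an6: "(\<lambda>i. lift d 6 (X 6) (lift d 6 (Z 6) \<psi>) i + lift d 6 (Z 6) (lift d 6 (X 6) \<psi>) i) = (\<lambda>i. 0)"
  proof (rule anti_transfer[where j=4 and R="(\<lambda>\<phi>. lift d 1 (X 1) (lift d 2 (X 2) (lift d 3 (X 3) (lift d 5 (X 5) (\<phi>)))))"])
    show "anticommute (d 4) (X 4) (Z 4)" using anti by simp
    show "lift d 6 (X 6) (\<psi>) = lift d 4 (X 4) (lift d 1 (X 1) (lift d 2 (X 2) (lift d 3 (X 3) (lift d 5 (X 5) (\<psi>)))))"
      using arg_cong[OF stab(7), of "lift d 6 (X 6)"] by (simp add: S)
    show "lift d 6 (Z 6) \<psi> = lift d 4 (Z 4) \<psi>" by (rule hz6)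
  qed (simp_all add: lift_comm)
  have an8: "(\<lambda>i. lift d 8 (X 8) (lift d 8 (Z 8) \<psi>) i + lift d 8 (Z 8) (lift d 8 (X 8) \<psi>) i) = (\<lambda>i. 0)"
  proof (rule anti_transfer[where j=7 and R="(\<lambda>\<phi>. lift d 1 (X 1) (lift d 2 (X 2) (lift d 3 (X 3) (lift d 9 (X 9) (\<phi>)))))"])
    show "anticommute (d 7) (X 7) (Z 7)" using anti by simp
    show "lift d 8 (X 8) (\<psi>) = lift d 7 (X 7) (lift d 1 (X 1) (lift d 2 (X 2) (lift d 3 (X 3) (lift d 9 (X 9) (\<psi>)))))"
      using arg_cong[OF stab(8), of "lift d 8 (X 8)"] by (simp add: S)
    show "lift d 8 (Z 8) \<psi> = lift d 7 (Z 7) \<psi>" by (rule hz8)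
  qed (simp_all add: lift_comm)
  have an9: "(\<lambda>i. lift d 9 (X 9) (lift d 9 (Z 9) \<psi>) i + lift d 9 (Z 9) (lift d 9 (X 9) \<psi>) i) = (\<lambda>i. 0)"
  proof (rule anti_transfer[where j=7 and R="(\<lambda>\<phi>. lift d 1 (X 1) (lift d 2 (X 2) (lift d 3 (X 3) (lift d 8 (X 8) (\<phi>)))))"])
    show "anticommute (d 7) (X 7) (Z 7)" using anti by simp
    show "lift d 9 (X 9) (\<psi>) = lift d 7 (X 7) (lift d 1 (X 1) (lift d 2 (X 2) (lift d 3 (X 3) (lift d 8 (X 8) (\<psi>)))))"
      using arg_cong[OF stab(8), of "lift d 9 (X 9)"] by (simp add: S)
    show "lift d 9 (Z 9) \<psi> = lift d 7 (Z 7) \<psi>" by (rule hz9)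
  qed (simp_all add: lift_comm)
  have xx1: "lift d 1 (X 1) (lift d 1 (X 1) (\<psi>)) = \<psi>"
  proof (rule sq_transfer[where b=4 and c=7 and P="(\<lambda>\<phi>. lift d 2 (X 2) (lift d 3 (X 3) (lift d 5 (X 5) (lift d 6 (X 6) (\<phi>)))))" and Q="(\<lambda>\<phi>. lift d 2 (X 2) (lift d 3 (X 3) (lift d 8 (X 8) (lift d 9 (X 9) (\<phi>)))))" and R="(\<lambda>\<phi>. lift d 5 (X 5) (lift d 6 (X 6) (lift d 8 (X 8) (lift d 9 (X 9) (\<phi>)))))"])
    show "lift d 1 (X 1) (lift d 4 (X 4) (\<psi>)) = (\<lambda>\<phi>. lift d 2 (X 2) (lift d 3 (X 3) (lift d 5 (X 5) (lift d 6 (X 6) (\<phi>))))) \<psi>"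
      using arg_cong[OF stab(7), of "(\<lambda>\<phi>. lift d 2 (X 2) (lift d 3 (X 3) (lift d 5 (X 5) (lift d 6 (X 6) (\<phi>)))))"] by (simp add: S)
    show "lift d 1 (X 1) (lift d 7 (X 7) (\<psi>)) = (\<lambda>\<phi>. lift d 2 (X 2) (lift d 3 (X 3) (lift d 8 (X 8) (lift d 9 (X 9) (\<phi>))))) \<psi>"
      using arg_cong[OF stab(8), of "(\<lambda>\<phi>. lift d 2 (X 2) (lift d 3 (X 3) (lift d 8 (X 8) (lift d 9 (X 9) (\<phi>)))))"] by (simp add: S)
    show "lift d 4 (X 4) (lift d 7 (X 7) (\<psi>)) = (\<lambda>\<phi>. lift d 5 (X 5) (lift d 6 (X 6) (lift d 8 (X 8) (lift d 9 (X 9) (\<phi>))))) \<psi>"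
      using arg_cong[OF stab(9), of "(\<lambda>\<phi>. lift d 5 (X 5) (lift d 6 (X 6) (lift d 8 (X 8) (lift d 9 (X 9) (\<phi>)))))"] by (simp add: S)
  qed (simp_all add: S)
  have xx4: "lift d 4 (X 4) (lift d 4 (X 4) (\<psi>)) = \<psi>"
  proof (rule sq_transfer[where b=1 and c=7 and P="(\<lambda>\<phi>. lift d 2 (X 2) (lift d 3 (X 3) (lift d 5 (X 5) (lift d 6 (X 6) (\<phi>)))))" and Q="(\<lambda>\<phi>. lift d 5 (X 5) (lift d 6 (X 6) (lift d 8 (X 8) (lift d 9 (X 9) (\<phi>)))))" and R="(\<lambda>\<phi>. lift d 2 (X 2) (lift d 3 (X 3) (lift d 8 (X 8) (lift d 9 (X 9) (\<phi>)))))"])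
    show "lift d 4 (X 4) (lift d 1 (X 1) (\<psi>)) = (\<lambda>\<phi>. lift d 2 (X 2) (lift d 3 (X 3) (lift d 5 (X 5) (lift d 6 (X 6) (\<phi>))))) \<psi>"
      using arg_cong[OF stab(7), of "(\<lambda>\<phi>. lift d 2 (X 2) (lift d 3 (X 3) (lift d 5 (X 5) (lift d 6 (X 6) (\<phi>)))))"] by (simp add: S)
    show "lift d 4 (X 4) (lift d 7 (X 7) (\<psi>)) = (\<lambda>\<phi>. lift d 5 (X 5) (lift d 6 (X 6) (lift d 8 (X 8) (lift d 9 (X 9) (\<phi>))))) \<psi>"
      using arg_cong[OF stab(9), of "(\<lambda>\<phi>. lift d 5 (X 5) (lift d 6 (X 6) (lift d 8 (X 8) (lift d 9 (X 9) (\<phi>)))))"] by (simp add: S)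
    show "lift d 1 (X 1) (lift d 7 (X 7) (\<psi>)) = (\<lambda>\<phi>. lift d 2 (X 2) (lift d 3 (X 3) (lift d 8 (X 8) (lift d 9 (X 9) (\<phi>))))) \<psi>"
      using arg_cong[OF stab(8), of "(\<lambda>\<phi>. lift d 2 (X 2) (lift d 3 (X 3) (lift d 8 (X 8) (lift d 9 (X 9) (\<phi>)))))"] by (simp add: S)
  qed (simp_all add: S)
  have xx7: "lift d 7 (X 7) (lift d 7 (X 7) (\<psi>)) = \<psi>"
  proof (rule sq_transfer[where b=1 and c=4 and P="(\<lambda>\<phi>. lift d 2 (X 2) (lift d 3 (X 3) (lift d 8 (X 8) (lift d 9 (X 9) (\<phi>)))))" and Q="(\<lambda>\<phi>. lift d 5 (X 5) (lift d 6 (X 6) (lift d 8 (X 8) (lift d 9 (X 9) (\<phi>)))))" and R="(\<lambda>\<phi>. lift d 2 (X 2) (lift d 3 (X 3) (lift d 5 (X 5) (lift d 6 (X 6) (\<phi>)))))"])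
    show "lift d 7 (X 7) (lift d 1 (X 1) (\<psi>)) = (\<lambda>\<phi>. lift d 2 (X 2) (lift d 3 (X 3) (lift d 8 (X 8) (lift d 9 (X 9) (\<phi>))))) \<psi>"
      using arg_cong[OF stab(8), of "(\<lambda>\<phi>. lift d 2 (X 2) (lift d 3 (X 3) (lift d 8 (X 8) (lift d 9 (X 9) (\<phi>)))))"] by (simp add: S)
    show "lift d 7 (X 7) (lift d 4 (X 4) (\<psi>)) = (\<lambda>\<phi>. lift d 5 (X 5) (lift d 6 (X 6) (lift d 8 (X 8) (lift d 9 (X 9) (\<phi>))))) \<psi>"
      using arg_cong[OF stab(9), of "(\<lambda>\<phi>. lift d 5 (X 5) (lift d 6 (X 6) (lift d 8 (X 8) (lift d 9 (X 9) (\<phi>)))))"] by (simp add: S)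
    show "lift d 1 (X 1) (lift d 4 (X 4) (\<psi>)) = (\<lambda>\<phi>. lift d 2 (X 2) (lift d 3 (X 3) (lift d 5 (X 5) (lift d 6 (X 6) (\<phi>))))) \<psi>"
      using arg_cong[OF stab(7), of "(\<lambda>\<phi>. lift d 2 (X 2) (lift d 3 (X 3) (lift d 5 (X 5) (lift d 6 (X 6) (\<phi>)))))"] by (simp add: S)
  qed (simp_all add: S)
  show ?thesis
  proof
    fix k assume "k \<in> {1..9::nat}"
    then have "k = 1 \<or> k = 2 \<or> k = 3 \<or> k = 4 \<or> k = 5 \<or> k = 6 \<or> k = 7 \<or> k = 8 \<or> k = 9" by auto
    moreover have "k \<in> {1,4,7} \<Longrightarrow> (\<lambda>i. lift d k (X k) (lift d k (Z k) \<psi>) i + lift d k (Z k) (lift d k (X k) \<psi>) i) = (\<lambda>i. 0)"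
      using anti by (intro lift_anti) auto
    ultimately show "lift d k (X k) (lift d k (X k) \<psi>) = \<psi>
         \<and> lift d k (Z k) (lift d k (Z k) \<psi>) = \<psi>
         \<and> (\<lambda>i. lift d k (X k) (lift d k (Z k) \<psi>) i + lift d k (Z k) (lift d k (X k) \<psi>) i) = (\<lambda>i. 0)"
      using xx1 xx4 xx7 zz1 zz4 zz7 an2 an3 an5 an6 an8 an9 xinv zinv state by auto
  qed
qed

end
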